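(* Let $G$ be a finite simple graph with $n=|V(G)|$, and let $v_1,\dots,v_r$ be a $\beta$-sequence in $G$ which is not contained in any $(r+1)$-clique of $G$. Then $r\ge W(G)$.
   Context: Graphs are finite, undirected, without loops or multiple edges; $N(v)$ is the set of vertices adjacent to $v$, $d(v)=|N(v)|$, and $N(v_1,\dots,v_k)=\bigcap_{j=1}^k N(v_j)$. A $p$-clique is a set of $p$ pairwise adjacent vertices. Define $W(G)=\sum_{v\in V(G)}\frac{1}{n-d(v)}$. A sequence $v_1,\dots,v_r$ of vertices is a $\beta$-sequence in $G$ if (i) $d(v_1)=\max\{d(v)\mid v\in V(G)\}$, and (ii) for $2\le i\le r$, $v_i\in N(v_1,\dots,v_{i-1})$ and $d(v_i)=\max\{d(v)\mid v\in N(v_1,\dots,v_{i-1})\}$ (degrees taken in $G$). *)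

theory Defs
  imports Complex_Main
begin

definition simple_graph :: "'a set \<Rightarrow> ('a \<Rightarrow> 'a \<Rightarrow> bool) \<Rightarrow> bool" where
  "simple_graph V E \<longleftrightarrow> finite V \<and> (\<forall>u v. E u v \<longrightarrow> E v u)
     \<and> (\<forall>v. \<not> E v v) \<and> (\<forall>u v. E u v \<longrightarrow> u \<in> V \<and> v \<in> V)"

definition nbhd :: "'a set \<Rightarrow> ('a \<Rightarrow> 'a \<Rightarrow> bool) \<Rightarrow> 'a \<Rightarrow> 'a set" where
  "nbhd V E v = {u \<in> V. E v u}"

definition deg :: "'a set \<Rightarrow> ('a \<Rightarrow> 'a \<Rightarrow> bool) \<Rightarrow> 'a \<Rightarrow> nat" where
  "deg V E v = card (nbhd V E v)"

definition common_nbhd :: "'a set \<Rightarrow> ('a \<Rightarrow> 'a \<Rightarrow> bool) \<Rightarrow> 'a list \<Rightarrow> 'a set" where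
  "common_nbhd V E vs = {u \<in> V. \<forall>w \<in> set vs. E w u}"

definition clique :: "'a set \<Rightarrow> ('a \<Rightarrow> 'a \<Rightarrow> bool) \<Rightarrow> 'a set \<Rightarrow> bool" where
  "clique V E K \<longleftrightarrow> K \<subseteq> V \<and> (\<forall>u\<in>K. \<forall>v\<in>K. u \<noteq> v \<longrightarrow> E u v)"

definition W :: "'a set \<Rightarrow> ('a \<Rightarrow> 'a \<Rightarrow> bool) \<Rightarrow> real" where
  "W V E = (\<Sum>v\<in>V. 1 / (real (card V) - real (deg V E v)))"

text \<open>beta-sequence v_1,...,v_r (list vs, r = length vs \<ge> 1; vs!0 = v_1).\<close>
definition beta_seq :: "'a set \<Rightarrow> ('a \<Rightarrow> 'a \<Rightarrow> bool) \<Rightarrow> 'a list \<Rightarrow> bool" where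
  "beta_seq V E vs \<longleftrightarrow> vs \<noteq> [] \<and> vs ! 0 \<in> V
     \<and> (\<forall>v\<in>V. deg V E v \<le> deg V E (vs ! 0))
     \<and> (\<forall>i. 1 \<le> i \<and> i < length vs \<longrightarrow>
           vs ! i \<in> common_nbhd V E (take i vs)
         \<and> (\<forall>u \<in> common_nbhd V E (take i vs). deg V E u \<le> deg V E (vs ! i)))"

end

theory Submission
  imports Defs
begin

lemma beta_edge:
  assumes "beta_seq V E vs" "j < i" "i < length vs"
  shows "E (vs!j) (vs!i)"
proof -
  have "vs ! i \<in> common_nbhd V E (take i vs)" using assms unfolding beta_seq_def by auto
  moreover have "vs ! j \<in> set (take i vs)" using assms(2,3)
  proof -
    have "j < length (take i vs)" using assms(2,3) by simp
    then have "take i vs ! j \<in> set (take i vs)" by (rule nth_mem)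
    then show ?thesis using assms(2) by simp
  qed
  ultimately show ?thesis unfolding common_nbhd_def by auto
qed

lemma beta_in_V:
  assumes "beta_seq V E vs" "i < length vs"
  shows "vs ! i \<in> V"
proof (cases "i = 0")
  case True then show ?thesis using assms unfolding beta_seq_def by auto
next
  case False
  then have "vs ! i \<in> common_nbhd V E (take i vs)" using assms unfolding beta_seq_def by auto
  then show ?thesis unfolding common_nbhd_def by auto
qed

lemma beta_distinct:
  assumes "simple_graph V E" "beta_seq V E vs"
  shows "distinct vs"
  unfolding distinct_conv_nth
proof (intro allI impI)
  fix i j assume h: "i < length vs" "j < length vs" "i \<noteq> j"
  have irr: "\<And>v. \<not> E v v" using assms(1) unfolding simple_graph_def by auto
  show "vs ! i \<noteq> vs ! j"
  proof (cases "i < j")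
    case True then show ?thesis using beta_edge[OF assms(2) True h(2)] irr by metis
  next
    case False then have "j < i" using h by auto
    then show ?thesis using beta_edge[OF assms(2) _ h(1)] irr by metis
  qed
qed

lemma deg_lt:
  assumes "simple_graph V E" "v \<in> V"
  shows "deg V E v < card V"
proof -
  have fin: "finite V" using assms(1) unfolding simple_graph_def by auto
  have "nbhd V E v \<subseteq> V - {v}" using assms(1) unfolding simple_graph_def nbhd_def by auto
  then have "card (nbhd V E v) \<le> card (V - {v})" using fin by (intro card_mono) auto
  also have "\<dots> < card V" using fin assms(2) by (metis card_Diff1_less)
  finally show ?thesis unfolding deg_def .
qed

theorem mainTheorem5:
  fixes V :: "'a set" and E :: "'a \<Rightarrow> 'a \<Rightarrow> bool" and vs :: "'a list"
  assumes "simple_graph V E"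
    and "beta_seq V E vs"
    and "\<not> (\<exists>K. clique V E K \<and> card K = length vs + 1 \<and> set vs \<subseteq> K)"
  shows "real (length vs) \<ge> W V E"
proof -
  have fin: "finite V" using assms(1) unfolding simple_graph_def by auto
  have sym: "\<And>u v. E u v \<Longrightarrow> E v u" using assms(1) unfolding simple_graph_def by auto
  have irr: "\<And>v. \<not> E v v" using assms(1) unfolding simple_graph_def by auto
  define n where "n = card V"
  define f where "f u = 1 / (real n - real (deg V E u))" for u
  define N where "N i = common_nbhd V E (take i vs)" for i
  have N0: "N 0 = V" by (simp add: N_def common_nbhd_def)
  have Nsub: "N i \<subseteq> V" for i by (auto simp: N_def common_nbhd_def)
  have Nstep: "N (Suc i) = {u \<in> N i. E (vs!i) u}" if "i < length vs" for i
    using that by (auto simp: N_def common_nbhd_def take_Suc_conv_app_nth)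
  have degle: "deg V E u \<le> deg V E (vs!i)" if "i < length vs" "u \<in> N i" for i u
  proof (cases "i = 0")
    case True then show ?thesis using that assms(2) N0 unfolding beta_seq_def by auto
  next
    case False then show ?thesis using that assms(2) unfolding beta_seq_def N_def by auto
  qed
  have piece: "sum f (N i - N (Suc i)) \<le> 1" if "i < length vs" for i
  proof -
    define A where "A = N i - N (Suc i)"
    define d where "d = deg V E (vs!i)"
    have viV: "vs!i \<in> V" using beta_in_V[OF assms(2) that] .
    have dlt: "d < n" using deg_lt[OF assms(1) viV] unfolding d_def n_def .
    have AV: "A \<subseteq> V - nbhd V E (vs!i)" using Nstep[OF that] Nsub[of i]
      unfolding A_def nbhd_def by auto
    have finA: "finite A" using AV fin finite_subset by blast
    have "card A \<le> card (V - nbhd V E (vs!i))" using AV fin by (intro card_mono) auto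
    also have "\<dots> = n - d" unfolding n_def d_def deg_def
      by (rule card_Diff_subset) (use fin in \<open>auto simp: nbhd_def intro: finite_subset\<close>)
    finally have cA: "card A \<le> n - d" .
    have fle: "f u \<le> 1 / (real n - real d)" if "u \<in> A" for u
    proof -
      have "deg V E u \<le> d" using degle[OF \<open>i < length vs\<close>, of u] that unfolding A_def d_def by auto
      then show ?thesis unfolding f_def using dlt
        by (intro divide_left_mono) auto
    qed
    have "sum f A \<le> sum (\<lambda>_. 1 / (real n - real d)) A" using fle by (intro sum_mono) auto
    also have "\<dots> = real (card A) / (real n - real d)" by simp
    also have "\<dots> \<le> 1"
    proof -
      have "real (card A) \<le> real n - real d" using cA dlt by linarith
      moreover have "real n - real d > 0" using dlt by simp
      ultimately show ?thesis by simp
    qed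
    finally show ?thesis unfolding A_def .
  qed
  have ind: "k \<le> length vs \<Longrightarrow> sum f (V - N k) \<le> real k" for k
  proof (induction k)
    case 0 then show ?case using N0 by simp
  next
    case (Suc k)
    have kl: "k < length vs" using Suc.prems by simp
    have "V - N (Suc k) = (V - N k) \<union> (N k - N (Suc k))"
      using Nstep[OF kl] Nsub[of k] by auto
    moreover have "(V - N k) \<inter> (N k - N (Suc k)) = {}" by auto
    ultimately have "sum f (V - N (Suc k)) = sum f (V - N k) + sum f (N k - N (Suc k))"
      using fin Nsub[of k] by (simp add: sum.union_disjoint finite_subset)
    also have "\<dots> \<le> real k + 1" using Suc.IH kl piece[OF kl] by simp
    finally show ?case by simp
  qed
  have Nr: "N (length vs) = {}"
  proof (rule ccontr)
    assume "N (length vs) \<noteq> {}"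
    then obtain u where u: "u \<in> N (length vs)" by auto
    then have uV: "u \<in> V" and uE: "\<And>w. w \<in> set vs \<Longrightarrow> E w u"
      by (auto simp: N_def common_nbhd_def)
    define K where "K = insert u (set vs)"
    have unot: "u \<notin> set vs" using uE irr by blast
    have dist: "distinct vs" using beta_distinct[OF assms(1,2)] .
    have cardK: "card K = length vs + 1" unfolding K_def using unot dist
      by (simp add: distinct_card)
    have setV: "set vs \<subseteq> V" using beta_in_V[OF assms(2)] by (auto simp: in_set_conv_nth)
    have pair: "E a b" if "a \<in> set vs" "b \<in> set vs" "a \<noteq> b" for a b
    proof -
      have "\<exists>i<length vs. vs!i = a" using that(1) by (simp add: in_set_conv_nth)
      then obtain i where i: "i < length vs" "vs!i = a" by blast
      have "\<exists>j<length vs. vs!j = b" using that(2) by (simp add: in_set_conv_nth)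
      then obtain j where j: "j < length vs" "vs!j = b" by blast
      note ij = i j
      then have "i \<noteq> j" using that by auto
      then consider "i < j" | "j < i" by linarith
      then show ?thesis
      proof cases
        case 1 then show ?thesis using beta_edge[OF assms(2) 1 j(1)] i j by simp
      next
        case 2 then show ?thesis using beta_edge[OF assms(2) 2 i(1)] i j sym by simp
      qed
    qed
    have "clique V E K" unfolding clique_def
    proof (intro conjI ballI impI)
      show "K \<subseteq> V" unfolding K_def using uV setV by blast
    next
      fix a b assume ab: "a \<in> K" "b \<in> K" "a \<noteq> b"
      show "E a b"
      proof (cases "a = u")
        case True
        then have "b \<in> set vs" using ab unfolding K_def by blast
        then show ?thesis using True uE sym by blast
      next
        case False
        then have a: "a \<in> set vs" using ab unfolding K_def by blast
        show ?thesis
        proof (cases "b = u")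
          case True then show ?thesis using a uE by blast
        next
          case False
          then have "b \<in> set vs" using ab unfolding K_def by blast
          then show ?thesis using pair a ab(3) by blast
        qed
      qed
    qed
    then show False using assms(3) cardK K_def by blast
  qed
  have "W V E = sum f V" unfolding W_def f_def n_def by simp
  also have "\<dots> = sum f (V - N (length vs))" using Nr by simp
  also have "\<dots> \<le> real (length vs)" using ind by simp
  finally show ?thesis .
qed

end
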